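(* Let $v_1,\dots,v_m$ be nonzero vectors spanning $\mathbb{R}^n$ and $N_m=\{1,\dots,m\}$. Define the relation $\bowtie$ on $N_m$ by: $i\bowtie j$ iff there exists $K\subset N_m$ of cardinality $n-1$ such that both $(v_i,(v_k)_{k\in K})$ and $(v_j,(v_k)_{k\in K})$ are bases of $\mathbb{R}^n$. Let $\sim$ be the transitive completion of $\bowtie$ ($i\sim j$ iff there is a finite chain from $i$ to $j$ in which consecutive elements are related by $\bowtie$). Then $\sim$ is an equivalence relation, the partition $C$ of $N_m$ into $\sim$-equivalence classes is an adapted partition, and $C$ is finer than every adapted partition (every class of $C$ is contained in some block of any adapted partition).
   Context: For $K\subset N_m$, $E_K$ denotes the linear span of $(v_k)_{k\in K}$. An adapted partition is a partition $S$ of $N_m$ such that $\mathbb{R}^n=\bigoplus_{K\in S}E_K$ (direct sum). *)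

theory Defs
  imports "HOL-Analysis.Analysis" "HOL-Library.Disjoint_Sets"
begin

definition basis_family :: "(nat \<Rightarrow> real^'n) \<Rightarrow> nat set \<Rightarrow> bool" where
  "basis_family v I \<longleftrightarrow> inj_on v I \<and> independent (v ` I) \<and> span (v ` I) = UNIV"

definition E :: "(nat \<Rightarrow> real^'n) \<Rightarrow> nat set \<Rightarrow> (real^'n) set" where
  "E v K = span (v ` K)"

text \<open>i bowtie j on N_m = {1..m}: some K of cardinality n-1 such that both
  (v_i,(v_k)_{k in K}) and (v_j,(v_k)_{k in K}) are bases (as families, so i,j not in K).\<close>
definition bowtie :: "(nat \<Rightarrow> real^'n) \<Rightarrow> nat \<Rightarrow> nat \<Rightarrow> nat \<Rightarrow> bool" where
  "bowtie v m i j \<longleftrightarrow> i \<in> {1..m} \<and> j \<in> {1..m} \<and>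
     (\<exists>K \<subseteq> {1..m}. card K = CARD('n) - 1 \<and> i \<notin> K \<and> j \<notin> K \<and>
        basis_family v (insert i K) \<and> basis_family v (insert j K))"

definition sim :: "(nat \<Rightarrow> real^'n) \<Rightarrow> nat \<Rightarrow> nat \<Rightarrow> nat \<Rightarrow> bool" where
  "sim v m = (bowtie v m)\<^sup>+\<^sup>+"

definition direct_sum :: "(nat \<Rightarrow> real^'n) \<Rightarrow> nat set set \<Rightarrow> bool" where
  "direct_sum v S \<longleftrightarrow> (\<forall>x. \<exists>!f. (\<forall>K\<in>S. f K \<in> E v K) \<and> (\<forall>K. K \<notin> S \<longrightarrow> f K = 0)
                                   \<and> x = (\<Sum>K\<in>S. f K))"

definition adapted_partition :: "(nat \<Rightarrow> real^'n) \<Rightarrow> nat \<Rightarrow> nat set set \<Rightarrow> bool" where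
  "adapted_partition v m S \<longleftrightarrow> partition_on {1..m} S \<and> direct_sum v S"

end

theory Submission
  imports Defs
begin


lemma span_idx:
  fixes v :: "nat \<Rightarrow> 'a::euclidean_space"
  assumes "inj_on v I" "finite I" "x \<in> span (v ` I)"
  shows "\<exists>a. x = (\<Sum>k\<in>I. a k *\<^sub>R v k)"
proof -
  from assms(3) obtain u where "x = (\<Sum>w\<in>v ` I. u w *\<^sub>R w)"
    using span_finite[of "v ` I"] assms(2) by auto
  also have "\<dots> = (\<Sum>k\<in>I. u (v k) *\<^sub>R v k)"
    using sum.reindex[OF assms(1), of "\<lambda>w. u w *\<^sub>R w"] by simp
  finally have xe: "x = (\<Sum>k\<in>I. u (v k) *\<^sub>R v k)" .
  show ?thesis by (rule exI[where x="\<lambda>k. u (v k)"]) (rule xe)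
qed

lemma idx_span:
  fixes v :: "nat \<Rightarrow> 'a::euclidean_space"
  shows "(\<Sum>k\<in>I. a k *\<^sub>R v k) \<in> span (v ` I)"
  by (intro span_sum span_scale span_base) auto

lemma indep_idx:
  fixes v :: "nat \<Rightarrow> 'a::euclidean_space"
  assumes "inj_on v I" "independent (v ` I)" "(\<Sum>k\<in>I. a k *\<^sub>R v k) = 0" "k \<in> I"
  shows "a k = 0"
proof -
  let ?c = "\<lambda>w. a (inv_into I v w)"
  have "(\<Sum>w\<in>v ` I. ?c w *\<^sub>R w) = (\<Sum>k\<in>I. ?c (v k) *\<^sub>R v k)"
    using sum.reindex[OF assms(1), of "\<lambda>w. ?c w *\<^sub>R w"] by simp
  also have "\<dots> = (\<Sum>k\<in>I. a k *\<^sub>R v k)"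
    using assms(1) by (intro sum.cong) auto
  finally have "(\<Sum>w\<in>v ` I. ?c w *\<^sub>R w) = 0" using assms(3) by simp
  have h: "\<forall>c. (\<Sum>w\<in>v ` I. c w *\<^sub>R w) = 0 \<longrightarrow> (\<forall>w\<in>v ` I. c w = 0)"
    using iffD1[OF independent_explicit assms(2)] by (rule conjunct2)
  have "?c (v k) = 0" using h[rule_format, OF \<open>(\<Sum>w\<in>v ` I. ?c w *\<^sub>R w) = 0\<close>] assms(4) by blast
  then show ?thesis using assms(1,4) by (simp add: inv_into_f_f)
qed

lemma group_sum:
  fixes g :: "nat \<Rightarrow> 'b::comm_monoid_add"
  assumes "partition_on A P" "finite A" "J \<subseteq> A"
  shows "(\<Sum>X\<in>P. \<Sum>k\<in>J \<inter> X. g k) = (\<Sum>k\<in>J. g k)"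
proof -
  have fP: "\<forall>X\<in>P. finite X" using assms(1,2) partition_onD1 
    by (metis Sup_upper finite_subset)
  have dP: "\<forall>X\<in>P. \<forall>Y\<in>P. X \<noteq> Y \<longrightarrow> X \<inter> Y = {}"
    using assms(1) by (metis disjointD partition_onD2)
  have aux: "sum g (J \<inter> X) = (\<Sum>k\<in>X. if k \<in> J then g k else 0)" if X: "X \<in> P" for X
  proof -
    have fX: "finite X" using fP X by blast
    have "J \<inter> X = X \<inter> J" by blast
    then show ?thesis using sum.inter_restrict[OF fX, of g J] by simp
  qed
  have "(\<Sum>X\<in>P. \<Sum>k\<in>J \<inter> X. g k) = (\<Sum>X\<in>P. \<Sum>k\<in>X. if k \<in> J then g k else 0)"
    using aux by (rule sum.cong[OF refl])
  also have "\<dots> = (\<Sum>k\<in>\<Union>P. if k \<in> J then g k else 0)"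
    using sum.Union_disjoint[OF fP dP, of "\<lambda>k. if k \<in> J then g k else 0"] by (simp add: o_def)
  also have "\<Union>P = A" using assms(1) partition_onD1 by blast
  also have "(\<Sum>k\<in>A. if k \<in> J then g k else 0) = (\<Sum>k\<in>A \<inter> J. g k)"
    using assms(2) by (simp add: sum.inter_restrict)
  also have "A \<inter> J = J" using assms(3) by blast
  finally show ?thesis .
qed



lemma bf_card:
  fixes v :: "nat \<Rightarrow> real^'n"
  assumes "basis_family v B"
  shows "finite B \<and> card B = CARD('n)"
proof -
  have inj: "inj_on v B" and ind: "independent (v ` B)" and sp: "span (v ` B) = UNIV"
    using assms unfolding basis_family_def by auto
  have "finite (v ` B)" using ind finiteI_independent by blast
  then have fB: "finite B" using inj finite_imageD by blast
  have "card B = card (v ` B)" using card_image[OF inj] by simp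
  also have "\<dots> = dim (span (v ` B))" using dim_span_eq_card_independent[OF ind] by simp
  also have "\<dots> = CARD('n)" using sp by simp
  finally show ?thesis using fB by simp
qed

lemma coef_notin:
  fixes v :: "nat \<Rightarrow> real^'n"
  assumes bf: "basis_family v B" and x: "x = (\<Sum>k\<in>B. a k *\<^sub>R v k)" and k0: "k0 \<in> B"
    and a0: "a k0 \<noteq> 0"
  shows "x \<notin> span (v ` (B - {k0}))"
proof
  assume xs: "x \<in> span (v ` (B - {k0}))"
  have inj: "inj_on v B" and ind: "independent (v ` B)"
    using bf unfolding basis_family_def by auto
  have fB: "finite B" using bf_card[OF bf] by simp
  obtain b where b: "x = (\<Sum>k\<in>B - {k0}. b k *\<^sub>R v k)"
    using span_idx[OF inj_on_diff[OF inj] _ xs] fB by blast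
  let ?b = "b(k0 := 0)"
  have "(\<Sum>k\<in>B. ?b k *\<^sub>R v k) = (\<Sum>k\<in>B - {k0}. ?b k *\<^sub>R v k)"
    using fB k0 by (simp add: sum.remove)
  also have "\<dots> = (\<Sum>k\<in>B - {k0}. b k *\<^sub>R v k)" by (intro sum.cong) auto
  finally have "(\<Sum>k\<in>B. ?b k *\<^sub>R v k) = x" using b by simp
  then have "(\<Sum>k\<in>B. (a k - ?b k) *\<^sub>R v k) = 0"
    using x by (simp add: scaleR_diff_left sum_subtractf)
  then have "a k0 - ?b k0 = 0" using indep_idx[OF inj ind, of "\<lambda>k. a k - ?b k" k0] k0 by blast
  then show False using a0 by simp
qed

lemma exchange:
  fixes v :: "nat \<Rightarrow> real^'n"
  assumes bf: "basis_family v B" and Bm: "B \<subseteq> {1..m}" and j: "j \<in> {1..m}" and k: "k \<in> B"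
    and nsp: "v j \<notin> span (v ` (B - {k}))"
  shows "bowtie v m j k"
proof -
  have inj: "inj_on v B" and ind: "independent (v ` B)"
    using bf unfolding basis_family_def by auto
  have fB: "finite B" and cB: "card B = CARD('n)" using bf_card[OF bf] by auto
  define K where "K = B - {k}"
  have vjK: "v j \<notin> v ` K"
  proof
    assume "v j \<in> v ` K"
    then have "v j \<in> span (v ` K)" by (rule span_base)
    then show False using nsp unfolding K_def by simp
  qed
  then have jK: "j \<notin> K" by blast
  have kK: "k \<notin> K" unfolding K_def by blast
  have cK: "card K = CARD('n) - 1" unfolding K_def using cB fB k by simp
  have iK: "insert k K = B" unfolding K_def using k by blast
  have injK: "inj_on v K" unfolding K_def using inj_on_diff[OF inj] .
  have indK: "independent (v ` K)" unfolding K_def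
    by (rule independent_mono[OF ind]) blast
  have fK: "finite K" unfolding K_def using fB by simp
  have inj2: "inj_on v (insert j K)" using injK vjK by auto
  have ind2: "independent (v ` insert j K)"
    using indK nsp vjK unfolding K_def by (simp add: independent_insert)
  have "card (v ` insert j K) = Suc (card K)"
    using inj2 fK jK by (simp add: card_image)
  also have "\<dots> = CARD('n)" using cK by simp
  finally have cc: "card (v ` insert j K) = dim (UNIV :: (real^'n) set)" by simp
  have "UNIV \<subseteq> span (v ` insert j K)"
    using card_eq_dim[of "v ` insert j K" UNIV] cc ind2 fK by simp
  then have sp2: "span (v ` insert j K) = UNIV" by blast
  have bf2: "basis_family v (insert j K)"
    unfolding basis_family_def using inj2 ind2 sp2 by simp
  have "k \<in> {1..m}" using Bm k by blast
  moreover have "K \<subseteq> {1..m}" unfolding K_def using Bm by blast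
  ultimately have "K \<subseteq> {1..m} \<and> card K = CARD('n) - 1 \<and> j \<notin> K \<and> k \<notin> K \<and>
     basis_family v (insert j K) \<and> basis_family v (insert k K)"
    using cK jK kK bf2 bf iK by simp
  then show ?thesis unfolding bowtie_def using j \<open>k \<in> {1..m}\<close> by blast
qed

lemma basis_with:
  fixes v :: "nat \<Rightarrow> real^'n"
  assumes nz: "v i \<noteq> 0" and sp: "span (v ` {1..m}) = UNIV" and i: "i \<in> {1..m}"
  shows "\<exists>B\<subseteq>{1..m}. i \<in> B \<and> basis_family v B"
proof -
  have "{v i} \<subseteq> v ` {1..m}" using i by blast
  moreover have "independent {v i}" using nz by simp
  ultimately obtain W where W: "{v i} \<subseteq> W" "W \<subseteq> v ` {1..m}" "independent W"
    "v ` {1..m} \<subseteq> span W"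
    by (rule maximal_independent_subset_extend)
  have "span (v ` {1..m}) \<subseteq> span W" by (rule span_minimal[OF W(4) subspace_span])
  then have spW: "span W = UNIV" using sp by auto
  have "W - {v i} \<subseteq> v ` {1..m}" using W(2) by blast
  from subset_image_inj[THEN iffD1, OF this] obtain C where
    C: "C \<subseteq> {1..m}" "inj_on v C" "W - {v i} = v ` C" by blast
  have iC: "v i \<notin> v ` C" using C(3) by blast
  have img: "v ` insert i C = W" using C(3) W(1) by blast
  have "v i \<notin> v ` (C - {i})" using iC by blast
  then have inj: "inj_on v (insert i C)" using C(2) by simp
  have "basis_family v (insert i C)"
    unfolding basis_family_def img using inj W(3) spW by blast
  then show ?thesis using C(1) i by blast
qed

lemma bowtie_refl:
  fixes v :: "nat \<Rightarrow> real^'n"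
  assumes nz: "v i \<noteq> 0" and sp: "span (v ` {1..m}) = UNIV" and i: "i \<in> {1..m}"
  shows "bowtie v m i i"
proof -
  obtain B where B: "B \<subseteq> {1..m}" "i \<in> B" "basis_family v B"
    using basis_with[OF nz sp i] by blast
  have inj: "inj_on v B" and ind: "independent (v ` B)"
    using B(3) unfolding basis_family_def by auto
  have "v ` (B - {i}) = v ` B - {v i}" using inj B(2) by (auto simp: inj_on_def)
  moreover have "v i \<notin> span (v ` B - {v i})" using ind B(2) dependent_def by blast
  ultimately have "v i \<notin> span (v ` (B - {i}))" by simp
  then show ?thesis using exchange[OF B(3) B(1) i B(2)] by simp
qed



lemma bowtie_dom: "bowtie v m i j \<Longrightarrow> i \<in> {1..m} \<and> j \<in> {1..m}"
  unfolding bowtie_def by blast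

lemma bowtie_sym: "bowtie v m i j \<Longrightarrow> bowtie v m j i"
  unfolding bowtie_def by blast

lemma sim_dom: "sim v m i j \<Longrightarrow> i \<in> {1..m} \<and> j \<in> {1..m}"
  unfolding sim_def by (induction rule: tranclp.induct) (auto dest: bowtie_dom)

lemma sim_sym: "sim v m i j \<Longrightarrow> sim v m j i"
  unfolding sim_def
proof (induction rule: tranclp.induct)
  case (r_into_trancl a b)
  then show ?case using bowtie_sym by (metis tranclp.r_into_trancl)
next
  case (trancl_into_trancl a b c)
  then show ?case using bowtie_sym tranclp_into_tranclp2 by metis
qed

lemma sim_trans: "sim v m i j \<Longrightarrow> sim v m j k \<Longrightarrow> sim v m i k"
  unfolding sim_def by (meson tranclp_trans)

lemma block_eq:
  fixes v :: "nat \<Rightarrow> real^'n"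
  assumes ap: "adapted_partition v m S" and bt: "bowtie v m i j"
    and X: "X \<in> S" "i \<in> X" and Y: "Y \<in> S" "j \<in> Y"
  shows "X = Y"
proof (rule ccontr)
  assume XY: "X \<noteq> Y"
  have part: "partition_on {1..m} S" and ds: "direct_sum v S"
    using ap unfolding adapted_partition_def by auto
  obtain K where K: "K \<subseteq> {1..m}" "card K = CARD('n) - 1" "i \<notin> K" "j \<notin> K"
    "basis_family v (insert i K)" "basis_family v (insert j K)"
    using bt unfolding bowtie_def by blast
  have im: "i \<in> {1..m}" using bt bowtie_dom by blast
  let ?I = "insert i K"
  have inj: "inj_on v ?I" and ind: "independent (v ` ?I)" and sp: "span (v ` ?I) = UNIV"
    using K(5) unfolding basis_family_def by auto
  have fI: "finite ?I" using bf_card[OF K(5)] by simp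
  obtain a where a: "v j = (\<Sum>k\<in>?I. a k *\<^sub>R v k)" using span_idx[OF inj fI] sp by blast
  have ai: "a i \<noteq> 0"
  proof
    assume "a i = 0"
    then have "v j = (\<Sum>k\<in>K. a k *\<^sub>R v k)" using a K(3) fI by simp
    then have "v j \<in> span (v ` K)" using idx_span by metis
    moreover have "independent (v ` insert j K)" and "inj_on v (insert j K)"
      using K(6) unfolding basis_family_def by auto
    ultimately show False using K(4) by (simp add: independent_insert)
  qed
  define f1 where "f1 = (\<lambda>Z. if Z = Y then v j else (0::real^'n))"
  define f2 where "f2 = (\<lambda>Z. if Z \<in> S then (\<Sum>k\<in>?I \<inter> Z. a k *\<^sub>R v k) else 0)"
  have "\<forall>Z\<in>S. f1 Z \<in> E v Z"
    unfolding f1_def E_def using Y by (auto intro: span_base span_zero)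
  moreover have "\<forall>Z. Z \<notin> S \<longrightarrow> f1 Z = 0" unfolding f1_def using Y by auto
  moreover have "v j = (\<Sum>Z\<in>S. f1 Z)"
  proof -
    have fS: "finite S" using part using finite_elements by blast 
    show ?thesis unfolding f1_def using fS Y(1) by simp
  qed
  moreover have "\<forall>Z\<in>S. f2 Z \<in> E v Z"
  proof
    fix Z assume ZS: "Z \<in> S"
    have "(\<Sum>k\<in>?I \<inter> Z. a k *\<^sub>R v k) \<in> span (v ` (?I \<inter> Z))" by (rule idx_span)
    moreover have "span (v ` (?I \<inter> Z)) \<subseteq> span (v ` Z)" by (intro span_mono image_mono) blast
    ultimately show "f2 Z \<in> E v Z" unfolding f2_def E_def using ZS by auto
  qed
  moreover have "\<forall>Z. Z \<notin> S \<longrightarrow> f2 Z = 0" unfolding f2_def by auto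
  moreover have "v j = (\<Sum>Z\<in>S. f2 Z)"
  proof -
    have "(\<Sum>Z\<in>S. f2 Z) = (\<Sum>Z\<in>S. \<Sum>k\<in>?I \<inter> Z. a k *\<^sub>R v k)"
      unfolding f2_def by simp
    also have "\<dots> = (\<Sum>k\<in>?I. a k *\<^sub>R v k)"
      using group_sum[OF part _ , of ?I "\<lambda>k. a k *\<^sub>R v k"] K(1) im by simp
    finally show ?thesis using a by simp
  qed
  ultimately have "f1 = f2" using ds unfolding direct_sum_def by blast
  then have "f2 X = f1 X" by simp
  then have "f2 X = 0" using XY unfolding f1_def by simp
  then have z: "(\<Sum>k\<in>?I \<inter> X. a k *\<^sub>R v k) = 0" using X unfolding f2_def by simp
  have "(\<Sum>k\<in>?I. (if k \<in> X then a k else 0) *\<^sub>R v k) = (\<Sum>k\<in>?I \<inter> X. a k *\<^sub>R v k)"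
    using fI by (simp add: sum.inter_restrict if_distrib[of "\<lambda>t. t *\<^sub>R _"] cong: if_cong)
  then have "(if i \<in> X then a i else 0) = 0"
    using indep_idx[OF inj ind, of "\<lambda>k. if k \<in> X then a k else 0" i] z by simp
  then show False using X(2) ai by simp
qed



lemma sim_block:
  fixes v :: "nat \<Rightarrow> real^'n"
  assumes ap: "adapted_partition v m S" and s: "sim v m i j" and X: "X \<in> S" "i \<in> X"
  shows "j \<in> X"
  using s X unfolding sim_def
proof (induction arbitrary: X rule: tranclp.induct)
  case (r_into_trancl a b)
  have part: "partition_on {1..m} S" using ap unfolding adapted_partition_def by auto
  have "b \<in> {1..m}" using r_into_trancl(1) bowtie_dom by blast
  then obtain Y where "Y \<in> S" "b \<in> Y" using part partition_onD1 by blast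
  then show ?case using block_eq[OF ap r_into_trancl(1)] r_into_trancl by metis
next
  case (trancl_into_trancl a b c)
  have part: "partition_on {1..m} S" using ap unfolding adapted_partition_def by auto
  have bX: "b \<in> X" using trancl_into_trancl by blast
  have "c \<in> {1..m}" using trancl_into_trancl(2) bowtie_dom by blast
  then obtain Y where "Y \<in> S" "c \<in> Y" using part partition_onD1 by blast
  then show ?case using block_eq[OF ap trancl_into_trancl(2)] trancl_into_trancl(4) bX by metis
qed

theorem proposition1:
  fixes v :: "nat \<Rightarrow> real^'n" and m :: nat
  assumes nonzero: "\<forall>i\<in>{1..m}. v i \<noteq> 0"
    and spans: "span (v ` {1..m}) = UNIV"
  shows "equiv {1..m} {(i, j). sim v m i j}
    \<and> adapted_partition v m ({1..m} // {(i, j). sim v m i j})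
    \<and> (\<forall>S. adapted_partition v m S \<longrightarrow>
          (\<forall>c \<in> {1..m} // {(i, j). sim v m i j}. \<exists>B\<in>S. c \<subseteq> B))"
proof -
  define R where "R = {(i, j). sim v m i j}"
  define A where "A = {1..m::nat}"
  define C where "C = A // R"
  have eqv: "equiv A R"
    unfolding equiv_def refl_on_def sym_def trans_def R_def A_def
  proof (intro conjI ballI allI impI)
    show "{(i, j). sim v m i j} \<subseteq> {1..m} \<times> {1..m}" using sim_dom by blast
  next
    fix x assume "x \<in> {1..m}"
    then show "(x, x) \<in> {(i, j). sim v m i j}"
      using bowtie_refl[of v x m] nonzero spans unfolding sim_def by auto
  next
    fix x y assume "(x, y) \<in> {(i, j). sim v m i j}"
    then show "(y, x) \<in> {(i, j). sim v m i j}" using sim_sym by blast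
  next
    fix x y z assume "(x, y) \<in> {(i, j). sim v m i j}" "(y, z) \<in> {(i, j). sim v m i j}"
    then show "(x, z) \<in> {(i, j). sim v m i j}" using sim_trans by blast
  qed
  have part: "partition_on A C" unfolding C_def using partition_on_quotient[OF eqv] .
  have fA: "finite A" unfolding A_def by simp
  have fC: "finite C" using finite_elements[OF fA part] .
  have finer: "\<forall>S. adapted_partition v m S \<longrightarrow> (\<forall>c \<in> C. \<exists>B\<in>S. c \<subseteq> B)"
  proof (intro allI impI ballI)
    fix S c assume ap: "adapted_partition v m S" and c: "c \<in> C"
    obtain i where ci: "c = R `` {i}" "i \<in> A" using c unfolding C_def by (rule quotientE)
    have partS: "partition_on {1..m} S" using ap unfolding adapted_partition_def by auto
    obtain X where X: "X \<in> S" "i \<in> X" using partS partition_onD1 ci(2) unfolding A_def by blast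
    have "c \<subseteq> X" using sim_block[OF ap _ X] ci(1) unfolding R_def by blast
    then show "\<exists>B\<in>S. c \<subseteq> B" using X(1) by blast
  qed
  have "A \<noteq> {}"
  proof
    assume "A = {}"
    then have "span (v ` {1..m}) = {0}" unfolding A_def by simp
    then show False using spans axis_eq_0_iff[of _ "1::real"]
      by (metis UNIV_I singletonD one_neq_zero)
  qed
  then obtain i0 where i0: "i0 \<in> A" by blast
  obtain B where B: "B \<subseteq> A" "basis_family v B"
    using basis_with[of v i0 m] nonzero spans i0 unfolding A_def by blast
  have injB: "inj_on v B" and indB: "independent (v ` B)" and spB: "span (v ` B) = UNIV"
    using B(2) unfolding basis_family_def by auto
  have fB: "finite B" using bf_card[OF B(2)] by simp
  have key: "v j \<in> span (v ` (B \<inter> c))" if c: "c \<in> C" and j: "j \<in> c" for c j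
  proof -
    obtain i where ci: "c = R `` {i}" "i \<in> A" using c unfolding C_def by (rule quotientE)
    have sij: "sim v m i j" using j ci unfolding R_def by blast
    have jA: "j \<in> A" using sim_dom[OF sij] unfolding A_def by blast
    obtain a where a: "v j = (\<Sum>k\<in>B. a k *\<^sub>R v k)" using span_idx[OF injB fB] spB by blast
    have z: "a k = 0" if k: "k \<in> B - B \<inter> c" for k
    proof (rule ccontr)
      assume "a k \<noteq> 0"
      then have "v j \<notin> span (v ` (B - {k}))" using coef_notin[OF B(2) a] k by blast
      then have "bowtie v m j k" using exchange[OF B(2) _ _, of m j k] B(1) jA k unfolding A_def by blast
      then have "sim v m i k" using sij unfolding sim_def by (meson tranclp.trancl_into_trancl)
      then show False using k ci unfolding R_def by blast
    qed
    have "(\<Sum>k\<in>B. a k *\<^sub>R v k) = (\<Sum>k\<in>B \<inter> c. a k *\<^sub>R v k)"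
      by (rule sum.mono_neutral_right[OF fB]) (use z in auto)
    then have "v j = (\<Sum>k\<in>B \<inter> c. a k *\<^sub>R v k)" using a by simp
    then show ?thesis using idx_span[of a v "B \<inter> c"] by simp
  qed
  have Esub: "E v c \<subseteq> span (v ` (B \<inter> c))" if "c \<in> C" for c
    unfolding E_def using key[OF that] by (intro span_minimal) (auto simp: subspace_span)
  have indep: "\<forall>c\<in>C. g c = 0"
    if g: "\<forall>c\<in>C. g c \<in> span (v ` (B \<inter> c))" and g0: "(\<Sum>c\<in>C. g c) = 0" for g
  proof -
    have "\<forall>c\<in>C. \<exists>b. g c = (\<Sum>k\<in>B \<inter> c. b k *\<^sub>R v k)"
    proof
      fix c assume cC: "c \<in> C"
      have i1: "inj_on v (B \<inter> c)" using inj_on_subset[OF injB Int_lower1] .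
      have f1: "finite (B \<inter> c)" using fB by simp
      show "\<exists>b. g c = (\<Sum>k\<in>B \<inter> c. b k *\<^sub>R v k)"
        using span_idx[OF i1 f1 g[rule_format, OF cC]] .
    qed
    then obtain b where b: "\<forall>c\<in>C. g c = (\<Sum>k\<in>B \<inter> c. b c k *\<^sub>R v k)" by metis
    define a where "a k = b (R `` {k}) k" for k
    have cls: "R `` {k} = c" if cC: "c \<in> C" and kc: "k \<in> c" for c k
    proof -
      obtain i where ci: "c = R `` {i}" "i \<in> A" using cC unfolding C_def by (rule quotientE)
      then have "(i, k) \<in> R" using kc by blast
      then show ?thesis using equiv_class_eq[OF eqv] ci by metis
    qed
    have ga: "g c = (\<Sum>k\<in>B \<inter> c. a k *\<^sub>R v k)" if "c \<in> C" for c
      using b that cls unfolding a_def by (auto intro!: sum.cong)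
    have "(\<Sum>k\<in>B. a k *\<^sub>R v k) = (\<Sum>c\<in>C. \<Sum>k\<in>B \<inter> c. a k *\<^sub>R v k)"
      using group_sum[OF part fA B(1), of "\<lambda>k. a k *\<^sub>R v k"] by simp
    also have "\<dots> = (\<Sum>c\<in>C. g c)" using ga by simp
    finally have "(\<Sum>k\<in>B. a k *\<^sub>R v k) = 0" using g0 by simp
    then have "\<forall>k\<in>B. a k = 0" using indep_idx[OF injB indB, of a] by blast
    then show ?thesis using ga by simp
  qed
  have ds: "direct_sum v C"
    unfolding direct_sum_def
  proof
    fix x :: "real^'n"
    obtain a where a: "x = (\<Sum>k\<in>B. a k *\<^sub>R v k)" using span_idx[OF injB fB] spB by blast
    define f where "f c = (if c \<in> C then (\<Sum>k\<in>B \<inter> c. a k *\<^sub>R v k) else 0)" for c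
    have f1: "\<forall>c\<in>C. f c \<in> E v c"
    proof
      fix c assume cC: "c \<in> C"
      have "(\<Sum>k\<in>B \<inter> c. a k *\<^sub>R v k) \<in> span (v ` (B \<inter> c))" by (rule idx_span)
      moreover have "span (v ` (B \<inter> c)) \<subseteq> span (v ` c)" by (intro span_mono image_mono) blast
      ultimately show "f c \<in> E v c" unfolding f_def E_def using cC by auto
    qed
    have f2: "\<forall>c. c \<notin> C \<longrightarrow> f c = 0" unfolding f_def by simp
    have f3: "x = (\<Sum>c\<in>C. f c)"
      using group_sum[OF part fA B(1), of "\<lambda>k. a k *\<^sub>R v k"] a unfolding f_def by simp
    show "\<exists>!f. (\<forall>K\<in>C. f K \<in> E v K) \<and> (\<forall>K. K \<notin> C \<longrightarrow> f K = 0) \<and> x = sum f C"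
    proof (rule ex1I[of _ f])
      show "(\<forall>K\<in>C. f K \<in> E v K) \<and> (\<forall>K. K \<notin> C \<longrightarrow> f K = 0) \<and> x = sum f C"
        using f1 f2 f3 by blast
    next
      fix h assume h: "(\<forall>K\<in>C. h K \<in> E v K) \<and> (\<forall>K. K \<notin> C \<longrightarrow> h K = 0) \<and> x = sum h C"
      let ?g = "\<lambda>c. h c - f c"
      have "\<forall>c\<in>C. ?g c \<in> span (v ` (B \<inter> c))"
        using h f1 Esub by (meson span_diff subsetD)
      moreover have "(\<Sum>c\<in>C. ?g c) = 0" using h f3 by (simp add: sum_subtractf)
      ultimately have "\<forall>c\<in>C. ?g c = 0" by (rule indep)
      then show "h = f" using h f2 by (metis eq_iff_diff_eq_0 ext)
    qed
  qed
  have ap: "adapted_partition v m C"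
    unfolding adapted_partition_def using part ds unfolding A_def by simp
  show ?thesis using eqv ap finer unfolding R_def A_def C_def by simp
qed


end
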